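(* Let $c>0$ and $0<p\le 1$, and define the hybrid ordinary-$\ell_p$ (HOP) function $l_{p,c}:\mathbb{R}\to\mathbb{R}$ by $$l_{p,c}(x)=\begin{cases} x^2/2, & |x|\le c,\\ \frac{1}{p}c^{2-p}|x|^p+\frac{c^2}{2}-\frac{1}{p}c^2, & |x|>c.\end{cases}$$ Define the (extended-real-valued) implicit regularizer $\varphi_{p,c}(y)=\sup_{t\in\mathbb{R}}\big[l_{p,c}(t)-\tfrac{(t-y)^2}{2}\big]$. Then for every $x\in\mathbb{R}$, $$l_{p,c}(x)=\min_{y\in\mathbb{R}}\ \frac{(x-y)^2}{2}+\varphi_{p,c}(y),$$ and this minimum is attained uniquely at $$y^\star=P_{\varphi_{p,c}}(x):=\max\{0,\ |x|-c^{2-p}|x|^{p-1}\}\cdot\operatorname{sign}(x),$$ with the convention $P_{\varphi_{p,c}}(0)=0$.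
   Context: $\operatorname{sign}(x)$ denotes the sign of $x$ (with $\operatorname{sign}(0)=0$). The function $l_{p,c}$ is continuously differentiable; for $p=1$ it is the Huber function. *)

theory Defs
  imports "HOL-Analysis.Analysis"
begin

definition hop :: "real \<Rightarrow> real \<Rightarrow> real \<Rightarrow> real" where
  "hop p c x = (if \<bar>x\<bar> \<le> c then x\<^sup>2 / 2
     else (1 / p) * c powr (2 - p) * \<bar>x\<bar> powr p + c\<^sup>2 / 2 - (1 / p) * c\<^sup>2)"

definition hop_reg :: "real \<Rightarrow> real \<Rightarrow> real \<Rightarrow> ereal" where
  "hop_reg p c y = (SUP t\<in>UNIV. ereal (hop p c t - (t - y)\<^sup>2 / 2))"

definition hop_prox :: "real \<Rightarrow> real \<Rightarrow> real \<Rightarrow> real" where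
  "hop_prox p c x = (if x = 0 then 0
     else max 0 (\<bar>x\<bar> - c powr (2 - p) * \<bar>x\<bar> powr (p - 1)) * sgn x)"

end

theory Submission
  imports Defs
begin

definition gg :: "real \<Rightarrow> real \<Rightarrow> real \<Rightarrow> real" where
  "gg p c t = t\<^sup>2 / 2 - hop p c t"

lemma G_small:
  assumes c: "c > 0" and p: "0 < p" "p \<le> 1" and t: "\<bar>t\<bar> \<le> c"
  shows "hop_prox p c t = 0"
proof (cases "t = 0")
  case True thus ?thesis by (simp add: hop_prox_def)
next
  case False
  hence at: "\<bar>t\<bar> > 0" by simp
  have "\<bar>t\<bar> = \<bar>t\<bar> powr (2 - p) * \<bar>t\<bar> powr (p - 1)"
    using at by (simp add: powr_add[symmetric])
  also have "\<dots> \<le> c powr (2 - p) * \<bar>t\<bar> powr (p - 1)"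
    using at t p by (intro mult_right_mono powr_mono2) auto
  finally show ?thesis using False by (simp add: hop_prox_def)
qed

lemma G_big:
  assumes "t > c" "c > 0" "0 < p" "p \<le> 1"
  shows "hop_prox p c t = t - c powr (2 - p) * t powr (p - 1)"
proof -
  have "c powr (2 - p) * t powr (p - 1) \<le> t powr (2 - p) * t powr (p - 1)"
    using assms by (intro mult_right_mono powr_mono2) auto
  also have "\<dots> = t" using assms by (simp add: powr_add[symmetric])
  finally show ?thesis using assms by (simp add: hop_prox_def)
qed

lemma G_odd: "hop_prox p c (- t) = - hop_prox p c t"
  by (simp add: hop_prox_def)

lemma gg_even: "gg p c (- t) = gg p c t"
  by (simp add: gg_def hop_def)

lemma G_nonneg: "t \<ge> 0 \<Longrightarrow> hop_prox p c t \<ge> 0"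
  by (simp add: hop_prox_def)

lemma G_mono_pos:
  assumes "0 \<le> a" "a \<le> b" "c > 0" "0 < p" "p \<le> 1"
  shows "hop_prox p c a \<le> hop_prox p c b"
proof (cases "a = 0")
  case True thus ?thesis using G_nonneg[of b p c] assms by (simp add: hop_prox_def)
next
  case False
  hence a: "a > 0" using assms by simp
  have "b powr (p - 1) \<le> a powr (p - 1)"
    using a assms by (intro powr_mono2') auto
  hence X: "c powr (2 - p) * b powr (p - 1) \<le> c powr (2 - p) * a powr (p - 1)"
    by (intro mult_left_mono) auto
  have "max 0 (a - c powr (2 - p) * a powr (p - 1)) \<le> max 0 (b - c powr (2 - p) * b powr (p - 1))"
    using X assms(2) by (smt (verit))
  thus ?thesis using a assms by (simp add: hop_prox_def)
qed

lemma G_mono: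
  assumes "a \<le> b" "c > 0" "0 < p" "p \<le> 1"
  shows "hop_prox p c a \<le> hop_prox p c b"
proof -
  consider "0 \<le> a" | "b \<le> 0" | "a < 0" "0 < b" by linarith
  thus ?thesis
  proof cases
    case 1 thus ?thesis using G_mono_pos assms by blast
  next
    case 2
    hence "hop_prox p c (-b) \<le> hop_prox p c (-a)" using G_mono_pos[of "-b" "-a" c p] assms by auto
    thus ?thesis by (simp add: G_odd)
  next
    case 3
    hence "hop_prox p c (-a) \<ge> 0" "hop_prox p c b \<ge> 0" using G_nonneg by auto
    thus ?thesis by (simp add: G_odd)
  qed
qed

definition hh :: "real \<Rightarrow> real \<Rightarrow> real \<Rightarrow> real" where
  "hh p c t = t\<^sup>2 / 2 - (1 / p) * c powr (2 - p) * t powr p - c\<^sup>2 / 2 + (1 / p) * c\<^sup>2"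

lemma hh_deriv:
  assumes "t > 0" "0 < p"
  shows "(hh p c has_real_derivative (t - c powr (2 - p) * t powr (p - 1))) (at t)"
proof -
  have "((\<lambda>t. t\<^sup>2 / 2 - (1 / p) * c powr (2 - p) * t powr p - c\<^sup>2 / 2 + (1 / p) * c\<^sup>2)
     has_real_derivative (2 * t / 2 - (1 / p) * c powr (2 - p) * (p * t powr (p - 1)))) (at t)"
    using assms by (auto intro!: derivative_eq_intros has_real_derivative_powr)
  thus ?thesis using assms unfolding hh_def by simp
qed

lemma gg_hh: "t \<ge> c \<Longrightarrow> c > 0 \<Longrightarrow> 0 < p \<Longrightarrow> gg p c t = hh p c t"
proof -
  assume a: "t \<ge> c" "c > 0" "0 < p"
  show ?thesis
  proof (cases "t = c")
    case True
    have "c powr (2 - p) * c powr p = c\<^sup>2" using a by (simp add: powr_add[symmetric])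
    thus ?thesis using True a by (simp add: gg_def hh_def hop_def algebra_simps)
  next
    case False thus ?thesis using a by (simp add: gg_def hh_def hop_def)
  qed
qed

lemma gg_deriv_nonneg:
  assumes t: "t \<ge> 0" and c: "c > 0" and p: "0 < p" "p \<le> 1"
  shows "(gg p c has_real_derivative hop_prox p c t) (at t)"
proof -
  consider "t < c" | "t = c" | "t > c" by linarith
  thus ?thesis
  proof cases
    case 1
    have "((\<lambda>_. 0::real) has_real_derivative 0) (at t)" by simp
    hence "(gg p c has_real_derivative 0) (at t)"
    proof (rule has_field_derivative_transform_within_open[where S="{-c<..<c}"])
      show "open {-c<..<c}" by simp
      show "t \<in> {-c<..<c}" using 1 t c by simp
      fix x :: real assume "x \<in> {-c<..<c}"
      thus "0 = gg p c x" by (auto simp add: gg_def hop_def)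
    qed
    thus ?thesis using G_small[of c p t] 1 t c p by simp
  next
    case 2
    have L: "((\<lambda>y. (gg p c y - gg p c c) / (y - c)) \<longlongrightarrow> 0) (at_left c)"
    proof -
      have "((\<lambda>_. 0::real) has_real_derivative 0) (at c within {0..c})" by simp
      hence "(gg p c has_real_derivative 0) (at c within {0..c})"
      proof (rule has_field_derivative_transform_within[where d=1])
        show "c \<in> {0..c}" using c by simp
        fix x :: real assume "x \<in> {0..c}"
        thus "0 = gg p c x" by (simp add: gg_def hop_def)
      qed simp
      thus ?thesis using c by (simp add: has_field_derivative_iff at_within_Icc_at_left)
    qed
    have R: "((\<lambda>y. (gg p c y - gg p c c) / (y - c)) \<longlongrightarrow> 0) (at_right c)"
    proof -
      have "(hh p c has_real_derivative (c - c powr (2 - p) * c powr (p - 1))) (at c within {c..c+1})"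
        using hh_deriv[of c p c] c p by (simp add: has_field_derivative_at_within)
      moreover have "c - c powr (2 - p) * c powr (p - 1) = 0"
        using c by (simp add: powr_add[symmetric])
      ultimately have "(hh p c has_real_derivative 0) (at c within {c..c+1})" by simp
      hence "(gg p c has_real_derivative 0) (at c within {c..c+1})"
      proof (rule has_field_derivative_transform_within[where d=1])
        show "c \<in> {c..c+1}" by simp
        fix x :: real assume "x \<in> {c..c+1}"
        thus "hh p c x = gg p c x" using gg_hh[of c x p] c p by simp
      qed simp
      thus ?thesis using c by (simp add: has_field_derivative_iff at_within_Icc_at_right)
    qed
    have "((\<lambda>y. (gg p c y - gg p c c) / (y - c)) \<longlongrightarrow> 0) (at c)"
      using L R by (rule filterlim_split_at)
    hence "(gg p c has_real_derivative 0) (at c)"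
      by (simp add: has_field_derivative_iff)
    thus ?thesis using G_small[of c p t] 2 t c p by simp
  next
    case 3
    have "(hh p c has_real_derivative hop_prox p c t) (at t)"
      using hh_deriv[of t p c] G_big[of c t p] 3 c p by simp
    thus ?thesis
    proof (rule has_field_derivative_transform_within_open[where S="{c<..}"])
      show "open {c<..}" by simp
      show "t \<in> {c<..}" using 3 by simp
      fix x :: real assume "x \<in> {c<..}"
      thus "hh p c x = gg p c x" using gg_hh[of c x p] c p by simp
    qed
  qed
qed

lemma gg_deriv:
  assumes c: "c > 0" and p: "0 < p" "p \<le> 1"
  shows "(gg p c has_real_derivative hop_prox p c t) (at t)"
proof (cases "t \<ge> 0")
  case True thus ?thesis using gg_deriv_nonneg assms by blast
next
  case False
  have d: "(gg p c has_real_derivative hop_prox p c (-t)) (at (-t))"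
    using gg_deriv_nonneg[of "-t" c p] False assms by simp
  have "((\<lambda>x. gg p c (- x)) has_real_derivative hop_prox p c (-t) * (-1)) (at t)"
    by (rule DERIV_chain2[where g="\<lambda>x. - x", OF d]) (auto intro!: derivative_eq_intros)
  moreover have "(\<lambda>x. gg p c (- x)) = gg p c" by (simp add: gg_even)
  ultimately show ?thesis by (simp add: G_odd)
qed

lemma gg_convex:
  assumes c: "c > 0" and p: "0 < p" "p \<le> 1"
  shows "gg p c t \<ge> gg p c x + hop_prox p c x * (t - x)"
proof -
  consider "t = x" | "x < t" | "t < x" by linarith
  thus ?thesis
  proof cases
    case 1 thus ?thesis by simp
  next
    case 2
    obtain z where z: "x < z" "z < t" "gg p c t - gg p c x = (t - x) * hop_prox p c z"
      using MVT2[OF 2, of "gg p c" "hop_prox p c"] gg_deriv assms by blast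
    have "hop_prox p c x \<le> hop_prox p c z" using G_mono z assms by simp
    hence "(t - x) * hop_prox p c x \<le> (t - x) * hop_prox p c z" using 2 by (intro mult_left_mono) auto
    thus ?thesis using z by (simp add: algebra_simps)
  next
    case 3
    obtain z where z: "t < z" "z < x" "gg p c x - gg p c t = (x - t) * hop_prox p c z"
      using MVT2[OF 3, of "gg p c" "hop_prox p c"] gg_deriv assms by blast
    have "hop_prox p c z \<le> hop_prox p c x" using G_mono z assms by simp
    hence "(x - t) * hop_prox p c z \<le> (x - t) * hop_prox p c x" using 3 by (intro mult_left_mono) auto
    thus ?thesis using z by (simp add: algebra_simps)
  qed
qed

lemma key_eq: "hop p c t - (t - y)\<^sup>2 / 2 = t * y - gg p c t - y\<^sup>2 / 2"
  by (simp add: gg_def power2_eq_square field_simps)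

lemma reg_lower: "ereal (hop p c x - (x - y)\<^sup>2 / 2) \<le> hop_reg p c y"
  unfolding hop_reg_def by (rule SUP_upper) simp

theorem mainTheorem1:
  fixes p c x :: real
  assumes "c > 0" and "0 < p" and "p \<le> 1"
  shows "ereal (hop p c x) = ereal ((x - hop_prox p c x)\<^sup>2 / 2) + hop_reg p c (hop_prox p c x)
     \<and> (\<forall>y. ereal ((x - hop_prox p c x)\<^sup>2 / 2) + hop_reg p c (hop_prox p c x)
              \<le> ereal ((x - y)\<^sup>2 / 2) + hop_reg p c y)
     \<and> (\<forall>y. ereal ((x - y)\<^sup>2 / 2) + hop_reg p c y
              = ereal ((x - hop_prox p c x)\<^sup>2 / 2) + hop_reg p c (hop_prox p c x)
            \<longrightarrow> y = hop_prox p c x)"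
proof -
  define ys where "ys = hop_prox p c x"
  have lower: "ereal (hop p c x) \<le> ereal ((x - y)\<^sup>2 / 2) + hop_reg p c y" for y
  proof -
    have "ereal (hop p c x) = ereal ((x - y)\<^sup>2 / 2) + ereal (hop p c x - (x - y)\<^sup>2 / 2)"
      by simp
    also have "\<dots> \<le> ereal ((x - y)\<^sup>2 / 2) + hop_reg p c y"
      by (rule add_left_mono) (rule reg_lower)
    finally show ?thesis .
  qed
  have "hop_reg p c ys \<le> ereal (hop p c x - (x - ys)\<^sup>2 / 2)"
    unfolding hop_reg_def
  proof (rule SUP_least)
    fix t :: real
    have "gg p c t \<ge> gg p c x + ys * (t - x)" unfolding ys_def using gg_convex assms by blast
    hence "hop p c t - (t - ys)\<^sup>2 / 2 \<le> hop p c x - (x - ys)\<^sup>2 / 2"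
      unfolding key_eq by (simp add: algebra_simps)
    thus "ereal (hop p c t - (t - ys)\<^sup>2 / 2) \<le> ereal (hop p c x - (x - ys)\<^sup>2 / 2)" by simp
  qed
  hence req: "hop_reg p c ys = ereal (hop p c x - (x - ys)\<^sup>2 / 2)"
    using reg_lower by (rule antisym)
  have E: "ereal ((x - ys)\<^sup>2 / 2) + hop_reg p c ys = ereal (hop p c x)"
    by (simp add: req)
  have U: "y = ys" if h: "ereal ((x - y)\<^sup>2 / 2) + hop_reg p c y = ereal (hop p c x)" for y
  proof -
    have ry: "hop_reg p c y = ereal (hop p c x - (x - y)\<^sup>2 / 2)"
      using h by (cases "hop_reg p c y") (auto simp: algebra_simps)
    have mn: "gg p c x - x * y \<le> gg p c t - t * y" for t
    proof -
      have "ereal (hop p c t - (t - y)\<^sup>2 / 2) \<le> hop_reg p c y" by (rule reg_lower)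
      hence "hop p c t - (t - y)\<^sup>2 / 2 \<le> hop p c x - (x - y)\<^sup>2 / 2" using ry by simp
      thus ?thesis unfolding key_eq by simp
    qed
    have "((\<lambda>t. gg p c t - t * y) has_real_derivative hop_prox p c x - 1 * y) (at x)"
      using gg_deriv[OF assms, of x] by (auto intro!: derivative_eq_intros)
    hence "hop_prox p c x - 1 * y = 0"
      by (rule DERIV_local_min[where d=1]) (use mn in auto)
    thus ?thesis unfolding ys_def by simp
  qed
  show ?thesis
    unfolding ys_def[symmetric] using E lower U by (metis)
qed

end
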